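(* Let $X$ be a finite set and let $g_1,\ldots,g_k$ be closure operators on $X$. Then the map $f:2^X\to 2^X$ defined by $f(A)=\bigcap_{i=1}^k g_i(A)$ is a closure operator (we say $f$ is generated from $g_1,\ldots,g_k$). Moreover, if $f,g_1,\ldots,g_k$ are closure operators on $X$, then $f$ is generated from $g_1,\ldots,g_k$ (i.e. $f(A)=\bigcap_{i=1}^k g_i(A)$ for all $A\subseteq X$) if and only if both of the following hold: (i) $S(g_i)\subseteq S(f)$ for all $i\in\{1,\ldots,k\}$; (ii) whenever $A\in S(f)$ and $x\in X\setminus A$, there exists $i\in\{1,\ldots,k\}$ such that $x\notin g_i(A)$.
   Context: A closure operator on $X$ is a map $f:2^X\to 2^X$ such that $A\subseteq f(A)$ for all $A$, $f(\emptyset)=\emptyset$, $f(f(A))=f(A)$, and $A\subseteq B$ implies $f(A)\subseteq f(B)$. $S(f)=\{A\subseteq X: f(A)=A\}$ is the set of closed sets of $f$. *)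

theory Defs
  imports Main
begin

text \<open>A closure operator on the ground set X: a map on the subsets of X
(values on non-subsets of X are irrelevant).\<close>
definition closure_op :: "'a set \<Rightarrow> ('a set \<Rightarrow> 'a set) \<Rightarrow> bool" where
  "closure_op X f \<longleftrightarrow>
     (\<forall>A. A \<subseteq> X \<longrightarrow> f A \<subseteq> X) \<and>
     (\<forall>A. A \<subseteq> X \<longrightarrow> A \<subseteq> f A) \<and>
     f {} = {} \<and>
     (\<forall>A. A \<subseteq> X \<longrightarrow> f (f A) = f A) \<and>
     (\<forall>A B. A \<subseteq> B \<and> B \<subseteq> X \<longrightarrow> f A \<subseteq> f B)"

definition closed_sets :: "'a set \<Rightarrow> ('a set \<Rightarrow> 'a set) \<Rightarrow> 'a set set" where
  "closed_sets X f = {A. A \<subseteq> X \<and> f A = A}"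

end

theory Submission
  imports Defs
begin

lemma closure_opD:
  assumes "closure_op X f"
  shows "A \<subseteq> X \<Longrightarrow> f A \<subseteq> X" "A \<subseteq> X \<Longrightarrow> A \<subseteq> f A" "f {} = {}"
    "A \<subseteq> X \<Longrightarrow> f (f A) = f A" "A \<subseteq> B \<Longrightarrow> B \<subseteq> X \<Longrightarrow> f A \<subseteq> f B"
  using assms unfolding closure_op_def by auto

theorem theorem2:
  fixes X :: "'a set" and k :: nat and g :: "nat \<Rightarrow> 'a set \<Rightarrow> 'a set"
  assumes "finite X" and "k \<ge> 1"
    and "\<forall>i\<in>{1..k}. closure_op X (g i)"
  shows "closure_op X (\<lambda>A. \<Inter>i\<in>{1..k}. g i A)
    \<and> (\<forall>f. closure_op X f \<longrightarrow>
          ((\<forall>A. A \<subseteq> X \<longrightarrow> f A = (\<Inter>i\<in>{1..k}. g i A)) \<longleftrightarrow>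
           ((\<forall>i\<in>{1..k}. closed_sets X (g i) \<subseteq> closed_sets X f) \<and>
            (\<forall>A\<in>closed_sets X f. \<forall>x\<in>X - A. \<exists>i\<in>{1..k}. x \<notin> g i A))))"
proof -
  have ne: "1 \<in> {1..k}" using assms(2) by simp
  have G1: "\<And>i A. i \<in> {1..k} \<Longrightarrow> A \<subseteq> X \<Longrightarrow> g i A \<subseteq> X"
   and G2: "\<And>i A. i \<in> {1..k} \<Longrightarrow> A \<subseteq> X \<Longrightarrow> A \<subseteq> g i A"
   and G3: "\<And>i. i \<in> {1..k} \<Longrightarrow> g i {} = {}"
   and G4: "\<And>i A. i \<in> {1..k} \<Longrightarrow> A \<subseteq> X \<Longrightarrow> g i (g i A) = g i A"
   and G5: "\<And>i A B. i \<in> {1..k} \<Longrightarrow> A \<subseteq> B \<Longrightarrow> B \<subseteq> X \<Longrightarrow> g i A \<subseteq> g i B"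
    using assms(3) closure_opD by metis+
  define h where "h = (\<lambda>A. \<Inter>i\<in>{1..k}. g i A)"
  have L: "\<And>A i. i \<in> {1..k} \<Longrightarrow> h A \<subseteq> g i A" unfolding h_def by (rule INT_lower)
  have H1: "\<And>A. A \<subseteq> X \<Longrightarrow> h A \<subseteq> X" using L[OF ne] G1[OF ne] by (rule subset_trans)
  have H2: "\<And>A. A \<subseteq> X \<Longrightarrow> A \<subseteq> h A" unfolding h_def by (rule INT_greatest) (rule G2)
  have H3: "h {} = {}" using L[OF ne, of "{}"] G3[OF ne] by simp
  have H5: "\<And>A B. A \<subseteq> B \<Longrightarrow> B \<subseteq> X \<Longrightarrow> h A \<subseteq> h B"
  proof -
    fix A B assume "A \<subseteq> B" "B \<subseteq> X"
    show "h A \<subseteq> h B" unfolding h_def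
    proof (rule INT_greatest)
      fix i assume i: "i \<in> {1..k}"
      have "(\<Inter>i\<in>{1..k}. g i A) \<subseteq> g i A" using i by (rule INT_lower)
      also have "\<dots> \<subseteq> g i B" using G5[OF i \<open>A \<subseteq> B\<close> \<open>B \<subseteq> X\<close>] .
      finally show "(\<Inter>i\<in>{1..k}. g i A) \<subseteq> g i B" .
    qed
  qed
  have H4: "\<And>A. A \<subseteq> X \<Longrightarrow> h (h A) = h A"
  proof -
    fix A assume A: "A \<subseteq> X"
    have hA: "(\<Inter>i\<in>{1..k}. g i A) = h A" by (simp add: h_def)
    have "h (h A) \<subseteq> (\<Inter>i\<in>{1..k}. g i A)"
    proof (rule INT_greatest)
      fix i assume i: "i \<in> {1..k}"
      have "h (h A) \<subseteq> g i (h A)" using L[OF i] .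
      also have "\<dots> \<subseteq> g i (g i A)" using G5[OF i L[OF i] G1[OF i A]] .
      also have "\<dots> = g i A" using G4[OF i A] .
      finally show "h (h A) \<subseteq> g i A" .
    qed
    hence "h (h A) \<subseteq> h A" unfolding hA .
    moreover have "h A \<subseteq> h (h A)" using H2[OF H1[OF A]] .
    ultimately show "h (h A) = h A" by (rule antisym)
  qed
  have C: "closure_op X h" unfolding closure_op_def using H1 H2 H3 H4 H5 by simp
  have D: "closure_op X f \<Longrightarrow>
          ((\<forall>A. A \<subseteq> X \<longrightarrow> f A = h A) \<longleftrightarrow>
           ((\<forall>i\<in>{1..k}. closed_sets X (g i) \<subseteq> closed_sets X f) \<and>
            (\<forall>A\<in>closed_sets X f. \<forall>x\<in>X - A. \<exists>i\<in>{1..k}. x \<notin> g i A)))" for f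
  proof -
    assume cf: "closure_op X f"
    have F1: "\<And>A. A \<subseteq> X \<Longrightarrow> f A \<subseteq> X"
     and F2: "\<And>A. A \<subseteq> X \<Longrightarrow> A \<subseteq> f A"
     and F4: "\<And>A. A \<subseteq> X \<Longrightarrow> f (f A) = f A"
     and F5: "\<And>A B. A \<subseteq> B \<Longrightarrow> B \<subseteq> X \<Longrightarrow> f A \<subseteq> f B"
      using cf closure_opD by metis+
    show ?thesis
    proof
      assume eq: "\<forall>A. A \<subseteq> X \<longrightarrow> f A = h A"
      have i: "\<forall>i\<in>{1..k}. closed_sets X (g i) \<subseteq> closed_sets X f"
      proof (intro ballI subsetI)
        fix i A assume i: "i \<in> {1..k}" and A: "A \<in> closed_sets X (g i)"
        hence AX: "A \<subseteq> X" and gA: "g i A = A" unfolding closed_sets_def by auto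
        have "f A = h A" using eq AX by blast
        also have "\<dots> \<subseteq> g i A" using L[OF i] .
        finally have "f A \<subseteq> A" using gA by simp
        thus "A \<in> closed_sets X f" using F2[OF AX] AX unfolding closed_sets_def by auto
      qed
      have ii: "\<forall>A\<in>closed_sets X f. \<forall>x\<in>X - A. \<exists>i\<in>{1..k}. x \<notin> g i A"
      proof (intro ballI)
        fix A x assume A: "A \<in> closed_sets X f" and x: "x \<in> X - A"
        hence "h A = A" using eq unfolding closed_sets_def by auto
        thus "\<exists>i\<in>{1..k}. x \<notin> g i A" using x by (auto simp: h_def)
      qed
      show "(\<forall>i\<in>{1..k}. closed_sets X (g i) \<subseteq> closed_sets X f) \<and>
            (\<forall>A\<in>closed_sets X f. \<forall>x\<in>X - A. \<exists>i\<in>{1..k}. x \<notin> g i A)" using i ii by blast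
    next
      assume "(\<forall>i\<in>{1..k}. closed_sets X (g i) \<subseteq> closed_sets X f) \<and>
            (\<forall>A\<in>closed_sets X f. \<forall>x\<in>X - A. \<exists>i\<in>{1..k}. x \<notin> g i A)"
      hence i: "\<And>i. i\<in>{1..k} \<Longrightarrow> closed_sets X (g i) \<subseteq> closed_sets X f"
        and ii: "\<And>A x. A\<in>closed_sets X f \<Longrightarrow> x\<in>X - A \<Longrightarrow> \<exists>i\<in>{1..k}. x \<notin> g i A" by blast+
      show "\<forall>A. A \<subseteq> X \<longrightarrow> f A = h A"
      proof (intro allI impI)
        fix A assume A: "A \<subseteq> X"
        have fgi: "f A \<subseteq> g i A" if ik: "i \<in> {1..k}" for i
        proof -
          have "g i A \<in> closed_sets X (g i)" using G1[OF ik A] G4[OF ik A] unfolding closed_sets_def by auto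
          hence "g i A \<in> closed_sets X f" using i[OF ik] by blast
          hence "f (g i A) = g i A" unfolding closed_sets_def by auto
          thus ?thesis using F5[OF G2[OF ik A] G1[OF ik A]] by simp
        qed
        have s1: "f A \<subseteq> h A" unfolding h_def by (rule INT_greatest) (rule fgi)
        have "h A \<subseteq> f A"
        proof
          fix x assume x: "x \<in> h A"
          show "x \<in> f A"
          proof (rule ccontr)
            assume nx: "x \<notin> f A"
            have "f A \<in> closed_sets X f" using F1[OF A] F4[OF A] unfolding closed_sets_def by auto
            moreover have "x \<in> X - f A" using nx x H1[OF A] by blast
            ultimately obtain i where ik: "i \<in> {1..k}" and "x \<notin> g i (f A)" using ii by blast
            moreover have "g i A \<subseteq> g i (f A)" using G5[OF ik F2[OF A] F1[OF A]] .
            ultimately show False using x L[OF ik] by blast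
          qed
        qed
        thus "f A = h A" using s1 by blast
      qed
    qed
  qed
  have hh: "(\<lambda>A. \<Inter>i\<in>{1..k}. g i A) = h" by (simp add: h_def)
  have hA2: "\<And>A. (\<Inter>i\<in>{1..k}. g i A) = h A" by (simp add: h_def)
  show ?thesis unfolding hh hA2 using C D by blast
qed

end
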